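(* Fix $\mu \in \mathcal{X}$ and let $P_X$ be a probability distribution on $\mathcal{X}$ with $P_X(\{ \mu \}) = 0$. Let $(P_n)$ be a sequence of probability distributions on $\mathcal{X}$ converging weakly to $P_X$. Then $D(\mu; P_n) \to D(\mu; P_X)$ as $n \to \infty$.
   Context: $(\mathcal{X}, d)$ is a complete separable metric space with its Borel $\sigma$-algebra. Define $h: \mathcal{X}^3 \to \mathbb{R}$ by $h(x_1, x_2, x_3) := \mathbb{I}( x_3 \notin \{x_1, x_2\} ) \dfrac{ d^2(x_1, x_3) + d^2(x_2, x_3) - d^2(x_1, x_2) }{d(x_1, x_3)\, d(x_2, x_3) }$, where $h := 0$ when $x_3 \in \{x_1,x_2\}$. The metric spatial depth of $\mu \in \mathcal{X}$ with respect to a probability distribution $P_X$ on $\mathcal{X}$ is $D(\mu; P_X) := 1 - \frac{1}{2} \mathrm{E} \{ h(X_1, X_2, \mu) \}$, where $X_1, X_2 \sim P_X$ are independent. *)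

theory Defs
  imports "HOL-Probability.Probability"
begin

definition msd_h :: "'a::metric_space \<Rightarrow> 'a \<Rightarrow> 'a \<Rightarrow> real" where
  "msd_h x1 x2 x3 =
     (if x3 \<notin> {x1, x2}
      then ((dist x1 x3)\<^sup>2 + (dist x2 x3)\<^sup>2 - (dist x1 x2)\<^sup>2) / (dist x1 x3 * dist x2 x3)
      else 0)"

definition metric_spatial_depth :: "'a::metric_space \<Rightarrow> 'a measure \<Rightarrow> real" where
  "metric_spatial_depth mu P =
     1 - 1/2 * (\<integral>z. msd_h (fst z) (snd z) mu \<partial>(P \<Otimes>\<^sub>M P))"

definition weak_conv_metric :: "(nat \<Rightarrow> 'a::metric_space measure) \<Rightarrow> 'a measure \<Rightarrow> bool" where
  "weak_conv_metric Ps P \<longleftrightarrow>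
     (\<forall>f :: 'a \<Rightarrow> real. continuous_on UNIV f \<and> bounded (range f) \<longrightarrow>
        (\<lambda>n. \<integral>x. f x \<partial>(Ps n)) \<longlonglongrightarrow> (\<integral>x. f x \<partial>P))"

end

theory Submission
  imports Defs
begin


lemma num_bound:
  fixes a b c :: real
  assumes "0 \<le> a" "0 \<le> b" "0 \<le> c" "c \<le> a + b" "a \<le> b + c" "b \<le> a + c"
  shows "\<bar>a\<^sup>2 + b\<^sup>2 - c\<^sup>2\<bar> \<le> 2 * a * b"
proof -
  have "c\<^sup>2 \<le> (a+b)\<^sup>2" using assms by (intro power_mono) auto
  moreover have "(a-b)\<^sup>2 \<le> c\<^sup>2"
  proof -
    have "\<bar>a - b\<bar> \<le> c" using assms by auto
    hence "\<bar>a-b\<bar>\<^sup>2 \<le> c\<^sup>2" by (intro power_mono) auto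
    thus ?thesis by simp
  qed
  moreover have "(a+b)\<^sup>2 = a\<^sup>2 + 2*a*b + b\<^sup>2" "(a-b)\<^sup>2 = a\<^sup>2 - 2*a*b + b\<^sup>2"
    by (simp_all add: power2_eq_square algebra_simps)
  ultimately show ?thesis unfolding abs_le_iff by linarith
qed

lemma F_bound:
  fixes a b c e :: real
  assumes "0 \<le> a" "0 \<le> b" "0 \<le> c" "c \<le> a + b" "a \<le> b + c" "b \<le> a + c" "0 < e"
  shows "\<bar>(a\<^sup>2 + b\<^sup>2 - c\<^sup>2) / (max a e * max b e)\<bar> \<le> 2"
proof -
  have p: "0 < max a e * max b e" using assms by auto
  have "\<bar>a\<^sup>2 + b\<^sup>2 - c\<^sup>2\<bar> \<le> 2 * a * b" by (rule num_bound[OF assms(1-6)])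
  also have "\<dots> \<le> 2 * (max a e * max b e)"
  proof -
    have "a * b \<le> max a e * max b e" using assms by (intro mult_mono) auto
    thus ?thesis by simp
  qed
  finally have "\<bar>a\<^sup>2 + b\<^sup>2 - c\<^sup>2\<bar> / (max a e * max b e) \<le> 2" using p by (simp add: divide_le_eq)
  thus ?thesis using p by (simp add: abs_divide)
qed

lemma F_mod:
  fixes a b c b' c' e d :: real
  assumes "0 \<le> a" "0 \<le> b" "0 \<le> c" "c \<le> a + b" "a \<le> b + c" "b \<le> a + c"
    and "0 \<le> b'" "0 \<le> c'" "c' \<le> a + b'" "a \<le> b' + c'" "b' \<le> a + c'"
    and "0 < e" "\<bar>b - b'\<bar> \<le> d" "\<bar>c - c'\<bar> \<le> d" "d \<le> e"
  shows "\<bar>(a\<^sup>2 + b\<^sup>2 - c\<^sup>2) / (max a e * max b e) - (a\<^sup>2 + b'\<^sup>2 - c'\<^sup>2) / (max a e * max b' e)\<bar> \<le> 10 * d / e"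
proof -
  define A where "A = max a e"
  define B where "B = max b e"
  define B' where "B' = max b' e"
  define N where "N = a\<^sup>2 + b\<^sup>2 - c\<^sup>2"
  define N' where "N' = a\<^sup>2 + b'\<^sup>2 - c'\<^sup>2"
  have A: "A \<ge> e" "A \<ge> a" and B: "B \<ge> e" "B \<ge> b" and B': "B' \<ge> e" "B' \<ge> b'"
    by (auto simp: A_def B_def B'_def)
  have d0: "0 \<le> d" using assms by linarith
  have pos: "A > 0" "B > 0" "B' > 0" using A B B' assms by auto
  have BB: "\<bar>B - B'\<bar> \<le> d" unfolding B_def B'_def using assms(13) by (auto simp: max_def)
  have N1: "\<bar>N - N'\<bar> \<le> d * (2*a + 4*b + 2*d)"
  proof -
    have "b\<^sup>2 - b'\<^sup>2 = (b - b') * (b + b')" by (simp add: power2_eq_square algebra_simps)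
    hence "\<bar>b\<^sup>2 - b'\<^sup>2\<bar> = \<bar>b - b'\<bar> * (b + b')" using assms by (simp add: abs_mult)
    also have "\<dots> \<le> d * (2*b + d)" using assms by (intro mult_mono) auto
    finally have 1: "\<bar>b\<^sup>2 - b'\<^sup>2\<bar> \<le> d * (2*b + d)" .
    have "c\<^sup>2 - c'\<^sup>2 = (c - c') * (c + c')" by (simp add: power2_eq_square algebra_simps)
    hence "\<bar>c\<^sup>2 - c'\<^sup>2\<bar> = \<bar>c - c'\<bar> * (c + c')" using assms by (simp add: abs_mult)
    also have "\<dots> \<le> d * (2*a + 2*b + d)" using assms by (intro mult_mono) auto
    finally have 2: "\<bar>c\<^sup>2 - c'\<^sup>2\<bar> \<le> d * (2*a + 2*b + d)" .
    have "\<bar>N - N'\<bar> \<le> \<bar>b\<^sup>2 - b'\<^sup>2\<bar> + \<bar>c\<^sup>2 - c'\<^sup>2\<bar>" unfolding N_def N'_def by linarith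
    moreover have "d * (2*b + d) + d * (2*a + 2*b + d) = d * (2*a + 4*b + 2*d)" by (simp add: algebra_simps)
    ultimately show ?thesis using 1 2 by linarith
  qed
  have t1: "\<bar>(N - N') / (A*B)\<bar> \<le> 8 * d / e"
  proof -
    have "e * (2*a + 4*b + 2*d) \<le> 2*(A*e) + 4*(B*e) + 2*(e*e)"
    proof -
      have "e*a \<le> A*e" "e*b \<le> B*e" "e*d \<le> e*e" using A B assms d0 by (auto intro: mult_left_mono mult_right_mono)
      thus ?thesis by (simp add: algebra_simps)
    qed
    also have "\<dots> \<le> 8*(A*B)"
    proof -
      have "A*e \<le> A*B" "B*e \<le> A*B" "e*e \<le> A*B" using A B pos assms
        by (auto intro: mult_left_mono mult_right_mono mult_mono)
      thus ?thesis by linarith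
    qed
    finally have "e * (2*a + 4*b + 2*d) \<le> 8*(A*B)" .
    hence "d * (e * (2*a + 4*b + 2*d)) \<le> d * (8*(A*B))" using d0 by (intro mult_left_mono) auto
    hence "(d * (2*a + 4*b + 2*d)) * e \<le> (8*d*(A*B))" by (simp add: ac_simps)
    hence "d * (2*a + 4*b + 2*d) \<le> (8*d*(A*B))/e" using assms by (simp add: pos_le_divide_eq)
    hence "d * (2*a + 4*b + 2*d) \<le> (8*d/e) * (A*B)" by simp
    hence NN: "\<bar>N - N'\<bar> \<le> (8*d/e) * (A*B)" using N1 by linarith
    have ABp: "A*B > 0" using pos by simp
    have "\<bar>(N - N')/(A*B)\<bar> = \<bar>N-N'\<bar>/(A*B)" using ABp by (simp add: abs_divide)
    also have "\<dots> \<le> (8*d/e)*(A*B)/(A*B)" using NN ABp by (intro divide_right_mono) auto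
    also have "\<dots> = 8*d/e" using pos by simp
    finally show ?thesis .
  qed
  have t2: "\<bar>N' / (A*B) - N'/(A*B')\<bar> \<le> 2 * d / e"
  proof -
    have e1: "N'/(A*B) - N'/(A*B') = N'/(A*B') * ((B' - B)/B)"
      using pos by (simp add: divide_simps) (simp add: algebra_simps)
    have b1: "\<bar>N'/(A*B')\<bar> \<le> 2" unfolding N'_def A_def B'_def
      by (rule F_bound) (use assms in auto)
    have b2: "\<bar>(B' - B)/B\<bar> \<le> d / e"
    proof -
      have "\<bar>(B' - B)/B\<bar> = \<bar>B' - B\<bar>/B" using pos by (simp add: abs_divide)
      also have "\<dots> \<le> d / B" using BB pos by (intro divide_right_mono) auto
      also have "\<dots> \<le> d / e" using B assms d0 by (intro divide_left_mono) auto
      finally show ?thesis .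
    qed
    have "\<bar>N'/(A*B) - N'/(A*B')\<bar> \<le> 2 * (d/e)" unfolding e1 abs_mult
      using b1 b2 by (intro mult_mono) auto
    thus ?thesis by simp
  qed
  have "N/(A*B) - N'/(A*B') = (N - N')/(A*B) + (N'/(A*B) - N'/(A*B'))" by (simp add: diff_divide_distrib)
  hence "\<bar>N/(A*B) - N'/(A*B')\<bar> \<le> 8*d/e + 2*d/e" using t1 t2 by linarith
  moreover have "8*d/e + 2*d/e = 10*d/e" by (simp add: add_divide_distrib[symmetric])
  ultimately have "\<bar>N/(A*B) - N'/(A*B')\<bar> \<le> 10*d/e" by simp
  thus ?thesis unfolding A_def B_def B'_def N_def N'_def .
qed


lemma meas_borel:
  assumes "sets M = sets borel" "f \<in> borel_measurable borel"
  shows "f \<in> borel_measurable M"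
proof -
  have "measurable M borel = measurable borel borel" by (rule measurable_cong_sets[OF assms(1)]) simp
  thus ?thesis using assms(2) by blast
qed

lemma meas_cont:
  assumes "sets M = sets borel" "continuous_on UNIV f"
  shows "f \<in> borel_measurable M"
proof -
  have "measurable M borel = measurable borel borel" by (rule measurable_cong_sets[OF assms(1)]) simp
  thus ?thesis using borel_measurable_continuous_onI[OF assms(2)] by blast
qed

lemma int_const: "prob_space M \<Longrightarrow> integrable M (\<lambda>x. c::real)"
  using finite_measure.integrable_const[OF prob_space.finite_measure] by blast

lemma bnd_integrable:
  fixes f :: "_ \<Rightarrow> real"
  assumes "prob_space M" "f \<in> borel_measurable M" "\<And>x. \<bar>f x\<bar> \<le> B"
  shows "integrable M f"
proof -
  interpret prob_space M by fact
  show ?thesis using integrable_const_bound[of f B] assms by simp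
qed

lemma abs_int_le:
  fixes f g :: "_ \<Rightarrow> real"
  assumes "integrable M f" "integrable M g" "\<And>x. \<bar>f x\<bar> \<le> g x"
  shows "\<bar>integral\<^sup>L M f\<bar> \<le> integral\<^sup>L M g"
proof -
  have "integral\<^sup>L M f \<le> integral\<^sup>L M g" using assms by (intro integral_mono) (auto simp: abs_le_iff)
  moreover have "integral\<^sup>L M (\<lambda>x. - f x) \<le> integral\<^sup>L M g" using assms by (intro integral_mono) (auto simp: abs_le_iff)
  ultimately show ?thesis by simp
qed

lemma bnd_int_le:
  fixes f :: "_ \<Rightarrow> real"
  assumes "prob_space M" "f \<in> borel_measurable M" "\<And>x. \<bar>f x\<bar> \<le> B"
  shows "\<bar>integral\<^sup>L M f\<bar> \<le> B"
proof -
  interpret prob_space M by fact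
  have "\<bar>integral\<^sup>L M f\<bar> \<le> integral\<^sup>L M (\<lambda>x. B)"
    using assms by (intro abs_int_le bnd_integrable[OF assms]) auto
  thus ?thesis using prob_space.prob_space[OF assms(1)] by simp
qed

lemma weak_lim:
  fixes f :: "'a::metric_space \<Rightarrow> real"
  assumes "weak_conv_metric Ps P" "continuous_on UNIV f" "\<And>x. \<bar>f x\<bar> \<le> B"
  shows "(\<lambda>n. \<integral>x. f x \<partial>(Ps n)) \<longlonglongrightarrow> (\<integral>x. f x \<partial>P)"
proof -
  have "bounded (range f)" using assms(3) unfolding bounded_iff by auto
  thus ?thesis using assms unfolding weak_conv_metric_def by blast
qed

lemma lemmaA:
  fixes H :: "nat \<Rightarrow> 'a::polish_space \<Rightarrow> real"
  assumes P: "prob_space P" "sets P = sets borel"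
    and Ps: "\<And>n. prob_space (Ps n)" "\<And>n. sets (Ps n) = sets borel"
    and wc: "weak_conv_metric Ps P"
    and C: "0 < C" and bnd: "\<And>n x. \<bar>H n x\<bar> \<le> C"
    and meas: "\<And>n. H n \<in> borel_measurable borel"
    and equi: "\<And>\<eta>. \<eta> > 0 \<Longrightarrow> \<exists>\<delta>>0. \<forall>n x y. dist x y < \<delta> \<longrightarrow> \<bar>H n x - H n y\<bar> \<le> \<eta>"
    and ptw: "\<And>x. (\<lambda>n. H n x) \<longlonglongrightarrow> 0"
  shows "(\<lambda>n. \<integral>x. H n x \<partial>(Ps n)) \<longlonglongrightarrow> 0"
  unfolding tendsto_iff
proof (intro allI impI)
  fix e :: real assume e: "e > 0"
  obtain \<delta> where d: "\<delta> > 0" and dH: "\<And>n x y. dist x y < \<delta> \<Longrightarrow> \<bar>H n x - H n y\<bar> \<le> e/4"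
    using equi[of "e/4"] e by auto
  obtain D :: "'a set" where Dc: "countable D" and Dd: "\<And>X. open X \<Longrightarrow> X \<noteq> {} \<Longrightarrow> \<exists>d\<in>D. d \<in> X"
    using countable_dense_exists by blast
  have Dne: "D \<noteq> {}" using Dd[of UNIV] by auto
  define q where "q = from_nat_into D"
  define \<psi> where "\<psi> m x = min 1 (infdist x (q ` {..m}) / \<delta>)" for m x
  have psi_cont: "continuous_on UNIV (\<psi> m)" for m
    unfolding \<psi>_def by (intro continuous_intros) (use d in auto)
  have psi_bnd: "\<bar>\<psi> m x\<bar> \<le> 1" for m x
    using d infdist_nonneg[of x "q ` {..m}"] unfolding \<psi>_def by auto
  have psi_lim: "(\<lambda>m. \<psi> m x) \<longlonglongrightarrow> 0" for x
    unfolding tendsto_iff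
  proof (intro allI impI)
    fix r :: real assume r: "r > 0"
    have rd: "r * \<delta> > 0" using r d by simp
    obtain y where "y \<in> D" "y \<in> ball x (r * \<delta>)" using Dd[of "ball x (r*\<delta>)"] rd by auto
    then obtain j where j: "q j = y" using from_nat_into_surj[OF Dc] unfolding q_def by blast
    have "dist x (q j) < r * \<delta>" using j \<open>y \<in> ball x (r*\<delta>)\<close> by auto
    show "eventually (\<lambda>m. dist (\<psi> m x) 0 < r) sequentially"
      unfolding eventually_sequentially
    proof (intro exI allI impI)
      fix m assume "j \<le> m"
      hence "infdist x (q ` {..m}) \<le> dist x (q j)" by (intro infdist_le) auto
      hence "infdist x (q ` {..m}) / \<delta> < r" using \<open>dist x (q j) < r * \<delta>\<close> d
        by (simp add: divide_less_eq)
      thus "dist (\<psi> m x) 0 < r" using d infdist_nonneg[of x "q ` {..m}"] r unfolding \<psi>_def by auto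
    qed
  qed
  have "(\<lambda>m. \<integral>x. \<psi> m x \<partial>P) \<longlonglongrightarrow> (\<integral>x. 0 \<partial>P)"
  proof (rule integral_dominated_convergence[where w="\<lambda>x. 1"])
    show "(\<lambda>x. 0::real) \<in> borel_measurable P" by simp
    show "\<psi> m \<in> borel_measurable P" for m using meas_cont[OF P(2) psi_cont] .
    show "integrable P (\<lambda>x. 1::real)" using int_const[OF P(1)] by simp
    show "AE x in P. (\<lambda>m. \<psi> m x) \<longlonglongrightarrow> 0" using psi_lim by simp
    show "AE x in P. norm (\<psi> m x) \<le> 1" for m using psi_bnd by simp
  qed
  hence "(\<lambda>m. \<integral>x. \<psi> m x \<partial>P) \<longlonglongrightarrow> 0" by simp
  then obtain m where m: "\<bar>\<integral>x. \<psi> m x \<partial>P\<bar> < e / (8*C)"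
    using C e unfolding LIMSEQ_iff by (metis divide_pos_pos le_refl real_norm_def diff_0_right zero_less_numeral mult_pos_pos)
  have ev1: "eventually (\<lambda>n. \<integral>x. \<psi> m x \<partial>(Ps n) < e/(4*C)) sequentially"
  proof -
    have "(\<lambda>n. \<integral>x. \<psi> m x \<partial>(Ps n)) \<longlonglongrightarrow> (\<integral>x. \<psi> m x \<partial>P)"
      using weak_lim[OF wc psi_cont psi_bnd] .
    moreover have "(\<integral>x. \<psi> m x \<partial>P) < e/(4*C)"
      using m C e by (smt (verit, ccfv_SIG) divide_strict_left_mono mult_pos_pos zero_less_numeral)
    ultimately show ?thesis by (rule order_tendstoD)
  qed
  have ev2: "eventually (\<lambda>n. \<forall>j\<in>{..m}. \<bar>H n (q j)\<bar> < e/4) sequentially"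
  proof (rule eventually_ball_finite)
    show "finite {..m}" by simp
    show "\<forall>j\<in>{..m}. eventually (\<lambda>n. \<bar>H n (q j)\<bar> < e/4) sequentially"
    proof
      fix j
      have "eventually (\<lambda>n. dist (H n (q j)) 0 < e/4) sequentially"
        using ptw[of "q j"] e unfolding tendsto_iff by (meson divide_pos_pos zero_less_numeral)
      thus "eventually (\<lambda>n. \<bar>H n (q j)\<bar> < e/4) sequentially" by simp
    qed
  qed
  show "eventually (\<lambda>n. dist (\<integral>x. H n x \<partial>(Ps n)) 0 < e) sequentially"
    using ev1 ev2
  proof eventually_elim
    case (elim n)
    have pt: "\<bar>H n x\<bar> \<le> e/2 + C * \<psi> m x" for x
    proof (cases "infdist x (q ` {..m}) < \<delta>")
      case True
      have "infdist x (q ` {..m}) = (INF a\<in>q ` {..m}. dist x a)" by (rule infdist_notempty) auto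
      with True obtain a where a: "a \<in> q ` {..m}" "dist x a < \<delta>"
        using cINF_less_iff[of "q ` {..m}" "dist x" \<delta>] by (auto intro: bdd_belowI[of _ 0])
      then obtain j where j: "j \<le> m" "a = q j" by auto
      have "dist x (q j) < \<delta>" using a j by simp
      hence "\<bar>H n x - H n (q j)\<bar> \<le> e/4" by (rule dH)
      hence "\<bar>H n x\<bar> \<le> \<bar>H n (q j)\<bar> + e/4" by linarith
      also have "\<dots> \<le> e/2"
      proof -
        have "\<bar>H n (q j)\<bar> < e/4" using elim(2) j(1) by blast
        thus ?thesis by linarith
      qed
      finally show ?thesis using C psi_bnd[of m x] infdist_nonneg[of x "q ` {..m}"] d
        unfolding \<psi>_def by (smt (verit) divide_nonneg_nonneg mult_nonneg_nonneg)
    next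
      case False
      hence "\<psi> m x = 1" using d unfolding \<psi>_def by (auto simp: le_divide_eq)
      thus ?thesis using bnd[of n x] e by simp
    qed
    have mH: "H n \<in> borel_measurable (Ps n)" using meas_borel[OF Ps(2) meas] .
    have "\<bar>\<integral>x. H n x \<partial>(Ps n)\<bar> \<le> \<integral>x. (e/2 + C * \<psi> m x) \<partial>(Ps n)"
    proof (rule abs_int_le)
      show "integrable (Ps n) (H n)" using bnd_integrable[OF Ps(1) mH bnd] .
      show "integrable (Ps n) (\<lambda>x. e/2 + C * \<psi> m x)"
        using Ps(1) meas_cont[OF Ps(2) psi_cont] psi_bnd
        by (intro Bochner_Integration.integrable_add integrable_mult_right bnd_integrable[OF Ps(1)]
            int_const) auto
      show "\<bar>H n x\<bar> \<le> e/2 + C * \<psi> m x" for x by (rule pt)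
    qed
    also have "\<dots> = e/2 + C * \<integral>x. \<psi> m x \<partial>(Ps n)"
    proof -
      have ip: "integrable (Ps n) (\<psi> m)" using bnd_integrable[OF Ps(1) meas_cont[OF Ps(2) psi_cont] psi_bnd] .
      show ?thesis using ip int_const[OF Ps(1)] prob_space.prob_space[OF Ps(1)]
        by (subst Bochner_Integration.integral_add) auto
    qed
    also have "\<dots> < e/2 + C * (e/(4*C))" using mult_strict_left_mono[OF elim(1) C] by linarith
    also have "\<dots> < e" using C e by simp
    finally show ?case by simp
  qed
qed



lemma sets_sq: "sets M = sets borel \<Longrightarrow> sets (M \<Otimes>\<^sub>M M) = sets (borel :: ('a::second_countable_topology \<times> 'a) measure)"
  using sets_pair_measure_cong[of M borel M borel] borel_prod by metis

lemma fubini_sq: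
  fixes F :: "'a::polish_space \<times> 'a \<Rightarrow> real"
  assumes M: "prob_space M" "sets M = sets borel" and Fm: "F \<in> borel_measurable borel" and Fb: "\<And>z. \<bar>F z\<bar> \<le> B"
  shows "(\<integral>z. F z \<partial>(M \<Otimes>\<^sub>M M)) = (\<integral>y. (\<integral>x. F (x,y) \<partial>M) \<partial>M)"
proof -
  interpret pair_prob_space M M
    using M by (simp add: pair_prob_space_def pair_sigma_finite_def prob_space_imp_sigma_finite)
  have "F \<in> borel_measurable (M \<Otimes>\<^sub>M M)" using meas_borel[OF sets_sq[OF M(2)] Fm] .
  hence "integrable (M \<Otimes>\<^sub>M M) F" using bnd_integrable[of "M \<Otimes>\<^sub>M M" F B] prob_space_pair[OF M(1) M(1)] Fb by blast
  hence i: "integrable (M \<Otimes>\<^sub>M M) (case_prod (\<lambda>x y. F (x,y)))" by simp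
  show ?thesis using integral_snd[OF i] by simp
qed

lemma lemmaB:
  fixes F :: "'a::polish_space \<times> 'a \<Rightarrow> real"
  assumes P: "prob_space P" "sets P = sets borel"
    and Ps: "\<And>n. prob_space (Ps n)" "\<And>n. sets (Ps n) = sets borel"
    and wc: "weak_conv_metric Ps P"
    and Fm: "F \<in> borel_measurable borel" and Fb: "\<And>z. \<bar>F z\<bar> \<le> B"
    and Fc: "\<And>y. continuous_on UNIV (\<lambda>x. F (x,y))"
    and Fmod: "\<And>\<eta>. \<eta> > 0 \<Longrightarrow> \<exists>\<delta>>0. \<forall>x y y'. dist y y' < \<delta> \<longrightarrow> \<bar>F (x,y) - F (x,y')\<bar> \<le> \<eta>"
  shows "(\<lambda>n. \<integral>z. F z \<partial>(Ps n \<Otimes>\<^sub>M Ps n)) \<longlonglongrightarrow> (\<integral>z. F z \<partial>(P \<Otimes>\<^sub>M P))"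
proof -
  have B0: "0 \<le> B" using Fb[of undefined] by linarith
  define T where "T M y = (\<integral>x. F (x,y) \<partial>M)" for M y
  have Fxm: "(\<lambda>x. F (x,y)) \<in> borel_measurable M" if "sets M = sets borel" for M y
    using meas_cont[OF that Fc] .
  have T_bnd: "\<bar>T M y\<bar> \<le> B" if "prob_space M" "sets M = sets borel" for M y
    unfolding T_def using bnd_int_le[OF that(1) Fxm[OF that(2)] Fb] .
  have T_mod: "\<bar>T M y - T M y'\<bar> \<le> \<eta>"
    if M: "prob_space M" "sets M = sets borel" and d: "dist y y' < \<delta>"
      and h: "\<forall>x y y'. dist y y' < \<delta> \<longrightarrow> \<bar>F (x,y) - F (x,y')\<bar> \<le> \<eta>" for M y y' \<delta> \<eta>
  proof -
    have i1: "integrable M (\<lambda>x. F (x,y))" "integrable M (\<lambda>x. F (x,y'))"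
      using bnd_integrable[OF M(1) Fxm[OF M(2)] Fb] by auto
    have "T M y - T M y' = (\<integral>x. F (x,y) - F (x,y') \<partial>M)"
      unfolding T_def using i1 by (simp add: Bochner_Integration.integral_diff)
    also have "\<bar>\<dots>\<bar> \<le> \<eta>"
      using M d h by (intro bnd_int_le) (auto intro!: borel_measurable_diff Fxm)
    finally show ?thesis .
  qed
  have T_cont: "continuous_on UNIV (T M)" if M: "prob_space M" "sets M = sets borel" for M
    unfolding continuous_on_iff
  proof (intro ballI allI impI)
    fix y :: 'a and e :: real assume "e > 0"
    then obtain \<delta> where "\<delta> > 0" and h: "\<forall>x y y'. dist y y' < \<delta> \<longrightarrow> \<bar>F (x,y) - F (x,y')\<bar> \<le> e/2"
      using Fmod[of "e/2"] by auto
    show "\<exists>d>0. \<forall>x'\<in>UNIV. dist x' y < d \<longrightarrow> dist (T M x') (T M y) < e"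
    proof (intro exI[of _ \<delta>] conjI ballI impI)
      fix x' assume "dist x' y < \<delta>"
      hence "\<bar>T M x' - T M y\<bar> \<le> e/2" using T_mod[OF M _ h] by blast
      thus "dist (T M x') (T M y) < e" using \<open>e > 0\<close> by (simp add: dist_real_def)
    qed (fact)
  qed
  define H where "H n y = T (Ps n) y - T P y" for n y
  have "(\<lambda>n. \<integral>y. H n y \<partial>(Ps n)) \<longlonglongrightarrow> 0"
  proof (rule lemmaA[OF P Ps wc])
    show "0 < 2*B+1" using B0 by simp
    show "\<bar>H n x\<bar> \<le> 2*B+1" for n x
      using T_bnd[OF Ps, of n x] T_bnd[OF P, of x] unfolding H_def by linarith
    show "H n \<in> borel_measurable borel" for n
      unfolding H_def by (intro borel_measurable_continuous_onI continuous_on_diff T_cont P Ps)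
    show "\<exists>\<delta>>0. \<forall>n x y. dist x y < \<delta> \<longrightarrow> \<bar>H n x - H n y\<bar> \<le> \<eta>" if "\<eta> > 0" for \<eta>
    proof -
      have eta2: "\<eta>/2 > 0" using that by simp
      obtain \<delta> where "\<delta> > 0" and h: "\<forall>x y y'. dist y y' < \<delta> \<longrightarrow> \<bar>F (x,y) - F (x,y')\<bar> \<le> \<eta>/2"
        using Fmod[OF eta2] by blast
      have "\<bar>H n x - H n y\<bar> \<le> \<eta>" if "dist x y < \<delta>" for n x y
        using T_mod[OF Ps that h, of n] T_mod[OF P that h] unfolding H_def by linarith
      thus ?thesis using \<open>\<delta> > 0\<close> by blast
    qed
    show "(\<lambda>n. H n x) \<longlonglongrightarrow> 0" for x
    proof -
      have "(\<lambda>n. T (Ps n) x) \<longlonglongrightarrow> T P x" unfolding T_def using weak_lim[OF wc Fc Fb] .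
      thus ?thesis unfolding H_def by (rule LIM_zero)
    qed
  qed
  moreover have "(\<lambda>n. \<integral>y. T P y \<partial>(Ps n)) \<longlonglongrightarrow> (\<integral>y. T P y \<partial>P)"
    using weak_lim[OF wc T_cont[OF P] T_bnd[OF P]] .
  ultimately have "(\<lambda>n. (\<integral>y. H n y \<partial>(Ps n)) + (\<integral>y. T P y \<partial>(Ps n))) \<longlonglongrightarrow> 0 + (\<integral>y. T P y \<partial>P)"
    by (rule tendsto_add)
  moreover have "(\<integral>y. H n y \<partial>(Ps n)) + (\<integral>y. T P y \<partial>(Ps n)) = (\<integral>z. F z \<partial>(Ps n \<Otimes>\<^sub>M Ps n))" for n
  proof -
    have i: "integrable (Ps n) (T M)" if "prob_space M" "sets M = sets borel" for M
      using bnd_integrable[OF Ps(1) meas_cont[OF Ps(2) T_cont[OF that]] T_bnd[OF that]] .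
    have "(\<integral>y. H n y \<partial>(Ps n)) = (\<integral>y. T (Ps n) y \<partial>(Ps n)) - (\<integral>y. T P y \<partial>(Ps n))"
      unfolding H_def using i[OF Ps] i[OF P] by (rule Bochner_Integration.integral_diff)
    thus ?thesis using fubini_sq[OF Ps Fm Fb, of n] unfolding T_def by simp
  qed
  moreover have "(\<integral>y. T P y \<partial>P) = (\<integral>z. F z \<partial>(P \<Otimes>\<^sub>M P))"
    using fubini_sq[OF P Fm Fb] unfolding T_def by simp
  ultimately show ?thesis by simp
qed



lemma tri:
  fixes x y mu :: "'a::metric_space"
  shows "0 \<le> dist x mu" "0 \<le> dist y mu" "0 \<le> dist x y"
    "dist x y \<le> dist x mu + dist y mu" "dist x mu \<le> dist y mu + dist x y"
    "dist y mu \<le> dist x mu + dist x y"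
  using dist_triangle[of x mu y] dist_triangle[of x y mu] dist_triangle[of y x mu] dist_triangle[of y mu x]
  by (auto simp: dist_commute)

lemma triC:
  fixes x y mu :: "'a::metric_space"
  shows "0 \<le> dist x mu \<and> 0 \<le> dist y mu \<and> 0 \<le> dist x y \<and>
    dist x y \<le> dist x mu + dist y mu \<and> dist x mu \<le> dist y mu + dist x y \<and>
    dist y mu \<le> dist x mu + dist x y"
  using dist_triangle[of x mu y] dist_triangle[of x y mu] dist_triangle[of y x mu] dist_triangle[of y mu x]
  by (auto simp: dist_commute)

lemma dist_lip:
  fixes x y z :: "'a::metric_space"
  shows "\<bar>dist x z - dist y z\<bar> \<le> dist x y"
  using dist_triangle[of x z y] dist_triangle[of y z x] by (auto simp: dist_commute)

definition Fe :: "'a::metric_space \<Rightarrow> real \<Rightarrow> 'a \<times> 'a \<Rightarrow> real" where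
  "Fe mu e z = ((dist (fst z) mu)\<^sup>2 + (dist (snd z) mu)\<^sup>2 - (dist (fst z) (snd z))\<^sup>2)
     / (max (dist (fst z) mu) e * max (dist (snd z) mu) e)"

definition chi :: "'a::metric_space \<Rightarrow> real \<Rightarrow> 'a \<Rightarrow> real" where
  "chi mu e x = min 1 (max 0 (2 - dist x mu / e))"

lemma h_bnd: "\<bar>msd_h x y mu\<bar> \<le> 2"
proof (cases "mu \<in> {x, y}")
  case True thus ?thesis by (simp add: msd_h_def)
next
  case False
  hence p: "dist x mu > 0" "dist y mu > 0" by auto
  have "\<bar>(dist x mu)\<^sup>2 + (dist y mu)\<^sup>2 - (dist x y)\<^sup>2\<bar> \<le> 2 * dist x mu * dist y mu"
    using num_bound[OF tri] .
  hence "\<bar>(dist x mu)\<^sup>2 + (dist y mu)\<^sup>2 - (dist x y)\<^sup>2\<bar> / (dist x mu * dist y mu) \<le> 2"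
    using p by (simp add: divide_le_eq)
  thus ?thesis using False p by (simp add: msd_h_def abs_divide abs_mult)
qed

lemma h_meas: "(\<lambda>z. msd_h (fst z) (snd z) mu) \<in> borel_measurable borel"
proof -
  define S where "S = {z. fst z \<noteq> mu \<and> snd z \<noteq> mu}"
  have "open S" unfolding S_def
    by (intro open_Collect_conj open_Collect_neq continuous_intros)
  hence S: "S \<inter> space borel \<in> sets borel" by simp
  have eq: "(\<lambda>z. msd_h (fst z) (snd z) mu) = (\<lambda>z. if z \<in> S then
      ((dist (fst z) mu)\<^sup>2 + (dist (snd z) mu)\<^sup>2 - (dist (fst z) (snd z))\<^sup>2) / (dist (fst z) mu * dist (snd z) mu)
      else 0)"
    by (auto simp: S_def msd_h_def fun_eq_iff)
  show ?thesis unfolding eq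
    by (intro measurable_If_set S borel_measurable_const borel_measurable_divide
          borel_measurable_continuous_onI continuous_intros)
qed

lemma Fe_bnd: "e > 0 \<Longrightarrow> \<bar>Fe mu e z\<bar> \<le> 2"
  unfolding Fe_def by (rule F_bound[OF tri]) 

lemma Fe_cont: "e > 0 \<Longrightarrow> continuous_on UNIV (Fe mu e)"
  unfolding Fe_def
  by (intro continuous_intros continuous_on_divide) (auto simp: max_def)

lemma Fe_cont1: "e > 0 \<Longrightarrow> continuous_on UNIV (\<lambda>x. Fe mu e (x, y))"
  unfolding Fe_def
  by (intro continuous_intros continuous_on_divide) (auto simp: max_def)

lemma Fe_meas: "e > 0 \<Longrightarrow> Fe mu e \<in> borel_measurable borel"
  by (rule borel_measurable_continuous_onI[OF Fe_cont])

lemma Fe_mod: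
  assumes e: "e > 0" and eta: "\<eta> > 0"
  shows "\<exists>\<delta>>0. \<forall>x y y'. dist y y' < \<delta> \<longrightarrow> \<bar>Fe mu e (x,y) - Fe mu e (x,y')\<bar> \<le> \<eta>"
proof (intro exI[of _ "min e (\<eta> * e / 10)"] conjI allI impI)
  show "min e (\<eta> * e / 10) > 0" using e eta by simp
  fix x y y' :: 'a assume d: "dist y y' < min e (\<eta> * e / 10)"
  have "\<bar>Fe mu e (x,y) - Fe mu e (x,y')\<bar> \<le> 10 * dist y y' / e"
    unfolding Fe_def fst_conv snd_conv
    by (rule F_mod) (use triC[of x y mu] triC[of x y' mu] dist_lip[where x=y and y=y' and z=mu] dist_lip[where x=y and y=y' and z=x] d e in \<open>auto simp: dist_commute\<close>)
  also have "\<dots> \<le> 10 * (\<eta> * e / 10) / e" using d e by (intro divide_right_mono) auto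
  also have "\<dots> = \<eta>" using e by simp
  finally show "\<bar>Fe mu e (x,y) - Fe mu e (x,y')\<bar> \<le> \<eta>" .
qed

lemma chi_cont: "e > 0 \<Longrightarrow> continuous_on UNIV (chi mu e)"
  unfolding chi_def by (intro continuous_intros) auto

lemma chi_bnd: "\<bar>chi mu e x\<bar> \<le> 1" "0 \<le> chi mu e x"
  unfolding chi_def by auto

lemma chi_one: "e > 0 \<Longrightarrow> dist x mu < e \<Longrightarrow> chi mu e x = 1"
  unfolding chi_def by (simp add: divide_less_eq)

lemma h_Fe:
  assumes e: "e > 0"
  shows "\<bar>msd_h (fst z) (snd z) mu - Fe mu e z\<bar> \<le> 4 * (chi mu e (fst z) + chi mu e (snd z))"
proof (cases "dist (fst z) mu < e \<or> dist (snd z) mu < e")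
  case True
  hence "chi mu e (fst z) + chi mu e (snd z) \<ge> 1"
    using chi_one[OF e] chi_bnd by (metis add_increasing le_add_same_cancel1 order_refl)
  hence a: "4 \<le> 4 * (chi mu e (fst z) + chi mu e (snd z))" by simp
  have "\<bar>msd_h (fst z) (snd z) mu - Fe mu e z\<bar> \<le> 4"
    using h_bnd[of "fst z" "snd z" mu] Fe_bnd[OF e, of mu z] by linarith
  thus ?thesis using a by (rule order_trans)
next
  case False
  hence "mu \<notin> {fst z, snd z}" using e by auto
  moreover have "max (dist (fst z) mu) e = dist (fst z) mu" "max (dist (snd z) mu) e = dist (snd z) mu"
    using False by auto
  ultimately have "msd_h (fst z) (snd z) mu = Fe mu e z"
    unfolding msd_h_def Fe_def by simp
  thus ?thesis using chi_bnd[of mu e] by simp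
qed

lemma int_sep:
  fixes g :: "'a::polish_space \<Rightarrow> real"
  assumes M: "prob_space M" "sets M = sets borel" and g: "continuous_on UNIV g" "\<And>x. \<bar>g x\<bar> \<le> 1"
  shows "(\<integral>z. 4 * (g (fst z) + g (snd z)) \<partial>(M \<Otimes>\<^sub>M M)) = 8 * (\<integral>x. g x \<partial>M)"
proof -
  have gm: "g \<in> borel_measurable M" using meas_cont[OF M(2) g(1)] .
  have gi: "integrable M g" using bnd_integrable[OF M(1) gm g(2)] .
  have ci: "integrable M (\<lambda>x. c)" for c :: real using int_const[OF M(1)] .
  have one: "measure M (space M) = 1" using prob_space.prob_space[OF M(1)] .
  have m4: "(\<lambda>z. 4 * (g (fst z) + g (snd z))) \<in> borel_measurable borel"
    by (intro borel_measurable_continuous_onI continuous_intros continuous_on_compose2[OF g(1)]) auto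
  have b4: "\<bar>4 * (g (fst z) + g (snd z))\<bar> \<le> 8" for z
  proof -
    have "\<bar>g (fst z) + g (snd z)\<bar> \<le> 2"
      using g(2)[of "fst z"] g(2)[of "snd z"] abs_triangle_ineq[of "g (fst z)" "g (snd z)"] by linarith
    thus ?thesis by (simp add: abs_mult)
  qed
  have "(\<integral>z. 4 * (g (fst z) + g (snd z)) \<partial>(M \<Otimes>\<^sub>M M)) = (\<integral>y. (\<integral>x. 4 * (g x + g y) \<partial>M) \<partial>M)"
    using fubini_sq[OF M m4 b4] by simp
  also have "\<dots> = (\<integral>y. 4 * (\<integral>x. g x \<partial>M) + 4 * g y \<partial>M)"
  proof (rule Bochner_Integration.integral_cong[OF refl])
    fix y
    have "(\<integral>x. 4 * (g x + g y) \<partial>M) = 4 * (\<integral>x. g x + g y \<partial>M)" by (rule integral_mult_right_zero)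
    also have "(\<integral>x. g x + g y \<partial>M) = (\<integral>x. g x \<partial>M) + g y"
      using gi ci one by (subst Bochner_Integration.integral_add) auto
    finally show "(\<integral>x. 4 * (g x + g y) \<partial>M) = 4 * (\<integral>x. g x \<partial>M) + 4 * g y" by simp
  qed
  also have "\<dots> = 4 * (\<integral>x. g x \<partial>M) + 4 * (\<integral>x. g x \<partial>M)"
    using gi ci one by (subst Bochner_Integration.integral_add) auto
  finally show ?thesis by simp
qed



lemma diff_bound:
  fixes mu :: "'a::polish_space"
  assumes M: "prob_space M" "sets M = sets borel" and e: "e > 0"
  shows "\<bar>(\<integral>z. msd_h (fst z) (snd z) mu \<partial>(M \<Otimes>\<^sub>M M)) - (\<integral>z. Fe mu e z \<partial>(M \<Otimes>\<^sub>M M))\<bar>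
     \<le> 8 * (\<integral>x. chi mu e x \<partial>M)"
proof -
  have PM: "prob_space (M \<Otimes>\<^sub>M M)" using prob_space_pair[OF M(1) M(1)] .
  have S: "sets (M \<Otimes>\<^sub>M M) = sets borel" using sets_sq[OF M(2)] .
  have ih: "integrable (M \<Otimes>\<^sub>M M) (\<lambda>z. msd_h (fst z) (snd z) mu)"
    using bnd_integrable[OF PM meas_borel[OF S h_meas]] h_bnd by blast
  have iF: "integrable (M \<Otimes>\<^sub>M M) (Fe mu e)"
    using bnd_integrable[OF PM meas_borel[OF S Fe_meas[OF e]]] Fe_bnd[OF e] by blast
  have m4: "(\<lambda>z. 4 * (chi mu e (fst z) + chi mu e (snd z))) \<in> borel_measurable borel"
    by (intro borel_measurable_continuous_onI continuous_intros continuous_on_compose2[OF chi_cont[OF e]]) auto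
  have b4: "\<bar>4 * (chi mu e (fst z) + chi mu e (snd z))\<bar> \<le> 8" for z
    using chi_bnd[of mu e "fst z"] chi_bnd[of mu e "snd z"] by (simp add: abs_mult)
  have iG: "integrable (M \<Otimes>\<^sub>M M) (\<lambda>z. 4 * (chi mu e (fst z) + chi mu e (snd z)))"
    using bnd_integrable[OF PM meas_borel[OF S m4] b4] .
  have "(\<integral>z. msd_h (fst z) (snd z) mu \<partial>(M \<Otimes>\<^sub>M M)) - (\<integral>z. Fe mu e z \<partial>(M \<Otimes>\<^sub>M M))
      = (\<integral>z. msd_h (fst z) (snd z) mu - Fe mu e z \<partial>(M \<Otimes>\<^sub>M M))"
    using ih iF by (rule Bochner_Integration.integral_diff[symmetric])
  also have "\<bar>\<dots>\<bar> \<le> (\<integral>z. 4 * (chi mu e (fst z) + chi mu e (snd z)) \<partial>(M \<Otimes>\<^sub>M M))"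
    using ih iF iG h_Fe[OF e] by (intro abs_int_le) auto
  also have "\<dots> = 8 * (\<integral>x. chi mu e x \<partial>M)"
    using int_sep[OF M chi_cont[OF e]] chi_bnd by blast
  finally show ?thesis .
qed

lemma chi_small:
  fixes mu :: "'a::polish_space"
  assumes P: "prob_space P" "sets P = sets borel" and null: "measure P {mu} = 0" and r: "r > 0"
  shows "\<exists>e>0. (\<integral>x. chi mu e x \<partial>P) < r"
proof -
  define ek where "ek k = 1 / real (Suc k)" for k
  have ek: "ek k > 0" for k unfolding ek_def by simp
  have "(\<lambda>k. \<integral>x. chi mu (ek k) x \<partial>P) \<longlonglongrightarrow> (\<integral>x. 0 \<partial>P)"
  proof (rule integral_dominated_convergence[where w="\<lambda>x. 1"])
    show "(\<lambda>x. 0::real) \<in> borel_measurable P" by simp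
    show "chi mu (ek k) \<in> borel_measurable P" for k using meas_cont[OF P(2) chi_cont[OF ek]] .
    show "integrable P (\<lambda>x. 1::real)" using int_const[OF P(1)] .
    show "AE x in P. norm (chi mu (ek k) x) \<le> 1" for k by (intro AE_I2) (simp add: chi_bnd(1))
    have sm: "{mu} \<in> sets P" using P(2) by simp
    have "emeasure P {mu} = 0"
      using finite_measure.emeasure_eq_measure[OF prob_space.finite_measure[OF P(1)]] null by simp
    hence nl: "{mu} \<in> null_sets P" using sm by auto
    have "AE x in P. x \<noteq> mu" by (rule AE_I'[OF nl]) auto
    thus "AE x in P. (\<lambda>k. chi mu (ek k) x) \<longlonglongrightarrow> 0"
    proof eventually_elim
      case (elim x)
      hence dpos: "dist x mu > 0" by simp
      obtain k0 :: nat where k0: "2 / dist x mu < real k0" using reals_Archimedean2 by blast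
      have "eventually (\<lambda>k. chi mu (ek k) x = 0) sequentially"
        unfolding eventually_sequentially
      proof (intro exI allI impI)
        fix k assume "k0 \<le> k"
        hence "2 / dist x mu < real (Suc k)" using k0 by linarith
        hence "2 < dist x mu * real (Suc k)" using dpos by (simp add: divide_less_eq mult.commute)
        hence "2 - dist x mu / ek k \<le> 0" unfolding ek_def by simp
        thus "chi mu (ek k) x = 0" unfolding chi_def by simp
      qed
      thus ?case by (rule tendsto_eventually)
    qed
  qed
  hence "(\<lambda>k. \<integral>x. chi mu (ek k) x \<partial>P) \<longlonglongrightarrow> 0" by simp
  from order_tendstoD(2)[OF this r] obtain k where "(\<integral>x. chi mu (ek k) x \<partial>P) < r"
    by (auto simp: eventually_sequentially)
  thus ?thesis using ek by blast
qed

theorem theorem5: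
  fixes mu :: "'a::polish_space"
    and P :: "'a measure"
    and Ps :: "nat \<Rightarrow> 'a measure"
  assumes "prob_space P" and "sets P = sets borel"
    and "measure P {mu} = 0"
    and "\<And>n. prob_space (Ps n)" and "\<And>n. sets (Ps n) = sets borel"
    and "weak_conv_metric Ps P"
  shows "(\<lambda>n. metric_spatial_depth mu (Ps n)) \<longlonglongrightarrow> metric_spatial_depth mu P"
proof -
  note P = assms(1,2) and Ps = assms(4,5) and wc = assms(6)
  define I where "I M f = (\<integral>z. f z \<partial>(M \<Otimes>\<^sub>M M))" for M :: "'a measure" and f :: "'a \<times> 'a \<Rightarrow> real"
  define hf where "hf z = msd_h (fst z) (snd z) mu" for z
  have "(\<lambda>n. I (Ps n) hf) \<longlonglongrightarrow> I P hf"
    unfolding tendsto_iff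
  proof (intro allI impI)
    fix r :: real assume r: "r > 0"
    obtain e where e: "e > 0" and ce: "(\<integral>x. chi mu e x \<partial>P) < r / 32"
      using chi_small[OF P assms(3), of "r/32"] r by auto
    have ev1: "eventually (\<lambda>n. (\<integral>x. chi mu e x \<partial>(Ps n)) < r / 32) sequentially"
      using order_tendstoD(2)[OF weak_lim[OF wc chi_cont[OF e] chi_bnd(1)] ce] .
    have ev2: "eventually (\<lambda>n. dist (I (Ps n) (Fe mu e)) (I P (Fe mu e)) < r / 4) sequentially"
    proof -
      have r4: "r/4 > 0" using r by simp
      show ?thesis
        using lemmaB[OF P Ps wc Fe_meas[OF e] Fe_bnd[OF e] Fe_cont1[OF e] Fe_mod[OF e]] r4
        unfolding I_def tendsto_iff by blast
    qed
    show "eventually (\<lambda>n. dist (I (Ps n) hf) (I P hf) < r) sequentially"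
      using ev1 ev2
    proof eventually_elim
      case (elim n)
      have a: "\<bar>I (Ps n) hf - I (Ps n) (Fe mu e)\<bar> \<le> 8 * (\<integral>x. chi mu e x \<partial>(Ps n))"
        unfolding I_def hf_def using diff_bound[OF Ps e] .
      have b: "\<bar>I P hf - I P (Fe mu e)\<bar> \<le> 8 * (\<integral>x. chi mu e x \<partial>P)"
        unfolding I_def hf_def using diff_bound[OF P e] .
      have c: "\<bar>I (Ps n) (Fe mu e) - I P (Fe mu e)\<bar> < r/4" using elim(2) by (simp add: dist_real_def)
      show ?case unfolding dist_real_def using a b c elim(1) ce unfolding abs_le_iff abs_less_iff by linarith
    qed
  qed
  hence "(\<lambda>n. 1 - 1/2 * I (Ps n) hf) \<longlonglongrightarrow> 1 - 1/2 * I P hf"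
    by (intro tendsto_intros)
  thus ?thesis unfolding metric_spatial_depth_def I_def hf_def .
qed


end
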